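(* Let $p,q$ be two distinct prime numbers and $l$ a positive odd integer. Then $\dfrac{-1}{p}\in\mathbb{Q}\text{-}\mathcal{KS}(q^{l})$ if and only if $\dfrac{-1}{q}\in\mathbb{Q}\text{-}\mathcal{KS}(p^{l})$.
   Context: Every nonzero rational $\alpha$ is written $\alpha=\alpha_1/\alpha_2$ with $\alpha_1\in\mathbb{Z}$, $\alpha_2$ a positive integer and $\gcd(\alpha_1,\alpha_2)=1$. For an integer $N\ge 2$ and a nonzero rational $\alpha=\alpha_1/\alpha_2$, $N$ is called an $\alpha$-Korselt number if $N\neq\alpha$ and $\alpha_2r-\alpha_1$ divides $\alpha_2N-\alpha_1$ (in $\mathbb{Z}$) for every prime divisor $r$ of $N$. $\mathbb{Q}\text{-}\mathcal{KS}(N)$ is the set of all $\beta\in\mathbb{Q}\setminus\{0,N\}$ such that $N$ is a $\beta$-Korselt number. *)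

theory Defs
  imports Complex_Main "HOL-Computational_Algebra.Primes"
begin

text \<open>N is an alpha-Korselt number, alpha = a1/a2 in lowest terms with a2 > 0
  (Isabelle's quotient_of gives exactly this normalized representation).\<close>
definition Korselt :: "nat \<Rightarrow> rat \<Rightarrow> bool" where
  "Korselt N \<alpha> \<longleftrightarrow> N \<ge> 2 \<and> \<alpha> \<noteq> 0 \<and> \<alpha> \<noteq> of_nat N \<and>
     (let (a1, a2) = quotient_of \<alpha> in
      \<forall>r::nat. prime r \<and> r dvd N \<longrightarrow> (a2 * int r - a1) dvd (a2 * int N - a1))"

definition QKS :: "nat \<Rightarrow> rat set" where
  "QKS N = {\<beta>. \<beta> \<noteq> 0 \<and> \<beta> \<noteq> of_nat N \<and> Korselt N \<beta>}"

end

theory Submission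
  imports Defs
begin

lemma qo: assumes "p > 0" shows "quotient_of (-1 / of_nat p :: rat) = (-1, int p)"
proof -
  have "(-1 / of_nat p :: rat) = Fract (-1) (int p)"
    by (simp add: Fract_of_int_quotient)
  then show ?thesis using assms by (simp add: quotient_of_Fract normalize_def)
qed

lemma prime_dvd_pow: assumes "prime (q::nat)" "prime r" "r dvd q ^ l" shows "r = q"
  using assms prime_dvd_power primes_dvd_imp_eq by blast

lemma korselt_iff:
  assumes "prime p" "prime q" "l > 0"
  shows "(-1 / of_nat p :: rat) \<in> QKS (q ^ l) \<longleftrightarrow>
         (int p * int q + 1) dvd (int p * int q ^ l + 1)"
proof -
  have p0: "p > 0" using assms prime_gt_0_nat by blast
  have q2: "q ^ l \<ge> 2"
  proof -
    have "q ^ 1 \<le> q ^ l" using assms(2,3) prime_gt_0_nat[OF assms(2)]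
      by (intro power_increasing) auto
    then show ?thesis using prime_ge_2_nat[OF assms(2)] by simp
  qed
  have ne: "(-1 / of_nat p :: rat) \<noteq> 0" using p0 by simp
  have ne2: "(-1 / of_nat p :: rat) \<noteq> of_nat (q ^ l)"
  proof -
    have "(-1 / of_nat p :: rat) < 0" using p0 by simp
    moreover have "(0::rat) \<le> of_nat (q ^ l)" by simp
    ultimately show ?thesis by linarith
  qed
  have "(\<forall>r::nat. prime r \<and> r dvd q ^ l \<longrightarrow> (int p * int r - -1) dvd (int p * int (q ^ l) - -1))
      \<longleftrightarrow> (int p * int q + 1) dvd (int p * int q ^ l + 1)"
  proof
    assume "\<forall>r::nat. prime r \<and> r dvd q ^ l \<longrightarrow> (int p * int r - -1) dvd (int p * int (q ^ l) - -1)"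
    then have "(int p * int q - -1) dvd (int p * int (q ^ l) - -1)"
      using assms by (simp add: dvd_power)
    then show "(int p * int q + 1) dvd (int p * int q ^ l + 1)" by simp
  next
    assume "(int p * int q + 1) dvd (int p * int q ^ l + 1)"
    then show "\<forall>r::nat. prime r \<and> r dvd q ^ l \<longrightarrow> (int p * int r - -1) dvd (int p * int (q ^ l) - -1)"
      using prime_dvd_pow[OF assms(2)] by auto
  qed
  then show ?thesis
    unfolding QKS_def Korselt_def using qo[OF p0] ne ne2 q2 by simp
qed

lemma pow_dvd: "(x::int) + 1 dvd x ^ (2*k) - 1"
proof (induction k)
  case 0
  then show ?case by simp
next
  case (Suc k)
  have e: "x ^ (2*Suc k) - 1 = x^2 * (x ^ (2*k) - 1) + (x + 1) * (x - 1)"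
    by (simp add: algebra_simps power_add power2_eq_square)
  show ?case unfolding e using Suc by (intro dvd_add dvd_mult dvd_mult2 dvd_refl)
qed

lemma hdvd: "(m::int) dvd X*m - Y \<longleftrightarrow> m dvd Y"
proof
  assume "m dvd X*m - Y"
  moreover have "Y = X*m - (X*m - Y)" by simp
  ultimately show "m dvd Y" by (metis dvd_diff dvd_triv_right)
next
  assume "m dvd Y" then show "m dvd X*m - Y" by (intro dvd_diff) auto
qed

lemma main:
  fixes a b :: int
  assumes "odd l"
  shows "(a*b+1) dvd (a * b ^ l + 1) \<longleftrightarrow> (a*b+1) dvd (b * a ^ l + 1)"
proof -
  obtain k where l: "l = 2*k+1" using assms oddE by blast
  have e1: "a * b ^ l + 1 = b^(2*k) * (a*b+1) - (b^(2*k) - 1)" unfolding l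
    by (simp add: algebra_simps)
  have e2: "b * a ^ l + 1 = a^(2*k) * (a*b+1) - (a^(2*k) - 1)" unfolding l
    by (simp add: algebra_simps)
  have A: "(a*b+1) dvd (a * b ^ l + 1) \<longleftrightarrow> (a*b+1) dvd (b^(2*k) - 1)"
    unfolding e1 by (rule hdvd)
  have B: "(a*b+1) dvd (b * a ^ l + 1) \<longleftrightarrow> (a*b+1) dvd (a^(2*k) - 1)"
    unfolding e2 by (rule hdvd)
  have C: "(a*b+1) dvd ((a*b)^(2*k) - 1)" by (rule pow_dvd)
  have e3: "(a*b)^(2*k) - 1 = a^(2*k) * (b^(2*k) - 1) + (a^(2*k) - 1)"
    by (simp add: algebra_simps power_mult_distrib)
  have e4: "(a*b)^(2*k) - 1 = b^(2*k) * (a^(2*k) - 1) + (b^(2*k) - 1)"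
    by (simp add: algebra_simps power_mult_distrib)
  show ?thesis unfolding A B
    using C unfolding e3 
    by (metis C e4 dvd_add_right_iff dvd_mult)
qed

theorem proposition5p4:
  fixes p q l :: nat
  assumes "prime p" and "prime q" and "p \<noteq> q" and "l > 0" and "odd l"
  shows "(-1 / of_nat p :: rat) \<in> QKS (q ^ l) \<longleftrightarrow> (-1 / of_nat q :: rat) \<in> QKS (p ^ l)"
  using korselt_iff[OF assms(1,2,4)] korselt_iff[OF assms(2,1,4)] main[OF assms(5), of "int p" "int q"]
  by (simp add: mult.commute)

end
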